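(* Let $\omega_+=5/2$ and $\Phi^+(q)=\kappa(q+\omega_+)$. Then $\Phi^+(q)=-2\,\frac{\Gamma(\frac12-q)\Gamma(\frac32+q)}{\Gamma(-q)\Gamma(1+q)}$ for $-\frac32<q<\frac12$, which is (the paper's normalization of) the Laplace exponent of a symmetric Cauchy process conditioned to stay positive. Furthermore, the growth-fragmentation $\mathbf{X}$ has no killing and its cumulant function is $\kappa(q)=-2\,\frac{\cos(\pi q)}{\pi}\Gamma(q-1)\Gamma(3-q)$ for $1<q<3$.
   Context: Let $\xi$ be the Lévy process started at $0$ with Laplace exponent $\Psi(q)=-\frac4\pi q+\frac2\pi\int_{y>-\ln 2}\big(e^{qy}-1-q(e^y-1)\big)\frac{e^{-y}\,\mathrm{d}y}{(e^y-1)^2}$, $q<3$, so that its Lévy measure is $\Lambda(\mathrm{d}y)=\frac2\pi\frac{e^{-y}}{(e^y-1)^2}\mathbf{1}_{\{y>-\ln2\}}\mathrm{d}y$. The cumulant function is $\kappa(q)=\Psi(q)+\int_{-\infty}^0(1-e^y)^q\,\Lambda(\mathrm{d}y)$. For $x>0$ let $Z$ started from $x$ be $Z_a=x\exp(\xi(\tau(a/x)))$, $0\le a<\zeta$, with $\tau(a)=\inf\{s\ge0:\int_0^se^{\xi(r)}\mathrm{d}r>a\}$, $\zeta=\inf\{a:Z_a=0\}$; for $x<0$, $Z$ from $x$ is $-Z$ from $-x$. The signed cell system: the Eve cell is $Z$ from $z>0$; each cell gives birth, at each of its jump times, to a child cell which (conditionally independently) is $Z$ started from the negative of that jump, ranked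 by decreasing absolute value of jumps. $\mathbf{X}$ is the (positive) self-similar growth-fragmentation of index $-1$ obtained from this signed cell system by keeping at each time only the sizes of cells $u$ such that $u$ and all its ancestors were born with positive size (i.e. killing every cell with negative size together with its progeny). *)

theory Defs
  imports "HOL-Analysis.Analysis"
begin

definition levy_density :: "real \<Rightarrow> real" where
  "levy_density y = (if y > - ln 2 then (2 / pi) * exp (- y) / (exp y - 1)^2 else 0)"

text \<open>Laplace exponent Psi(q) of xi (meaningful for q < 3).\<close>
definition Psi :: "real \<Rightarrow> real" where
  "Psi q = - (4 / pi) * q +
     (LINT y:{- ln 2<..}|lborel. (exp (q * y) - 1 - q * (exp y - 1)) * levy_density y)"

definition kappa :: "real \<Rightarrow> real" where
  "kappa q = Psi q + (LINT y:{..<0}|lborel. ((1 - exp y) powr q) * levy_density y)"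

definition omega_plus :: real where
  "omega_plus = 5 / 2"

definition Phi_plus :: "real \<Rightarrow> real" where
  "Phi_plus q = kappa (q + omega_plus)"

end

theory Submission
  imports Defs
begin


lemma Gamma_reflection_real:
  fixes x :: real
  shows "Gamma x * Gamma (1 - x) = pi / sin (pi * x)"
proof -
  have "Gamma (complex_of_real x) * Gamma (1 - complex_of_real x) = of_real pi / sin (of_real pi * of_real x)"
    by (rule Gamma_reflection_complex)
  also have "Gamma (1 - complex_of_real x) = of_real (Gamma (1 - x))"
    by (metis Gamma_complex_of_real of_real_1 of_real_diff)
  finally have "complex_of_real (Gamma x * Gamma (1 - x)) = complex_of_real (pi / sin (pi * x))"
    by (simp add: Gamma_complex_of_real sin_of_real flip: of_real_mult)
  thus ?thesis by (simp only: of_real_eq_iff)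
qed

lemma Digamma_reflection_01:
  fixes x :: real
  assumes x: "0 < x" "x < 1"
  shows "Digamma (1 - x) - Digamma x = pi * cos (pi * x) / sin (pi * x)"
proof -
  have s: "sin (pi * x) > 0" using x by (intro sin_gt_zero) auto
  have ni: "x \<notin> \<int>\<^sub>\<le>\<^sub>0" "1 - x \<notin> \<int>\<^sub>\<le>\<^sub>0" using x by (auto elim!: nonpos_Ints_cases)
  have d1: "((\<lambda>t. Gamma t * Gamma (1 - t)) has_field_derivative
      (Gamma x * Digamma x * Gamma (1 - x) + Gamma x * (Gamma (1 - x) * Digamma (1 - x) * (-1)))) (at x)"
    using ni by (intro derivative_eq_intros refl) auto
  have d2: "((\<lambda>t. pi / sin (pi * t)) has_field_derivative
      (- (pi * (cos (pi * x) * pi)) / (sin (pi * x))^2)) (at x)"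
    using s by (auto intro!: derivative_eq_intros simp: power2_eq_square)
  have "((\<lambda>t. Gamma t * Gamma (1 - t)) has_field_derivative
      (- (pi * (cos (pi * x) * pi)) / (sin (pi * x))^2)) (at x)"
    using d2 by (simp add: Gamma_reflection_real)
  from DERIV_unique[OF d1 this]
  have e: "Gamma x * Gamma (1 - x) * (Digamma x - Digamma (1 - x)) = - (pi * (cos (pi * x) * pi)) / (sin (pi * x))^2"
    by (simp add: algebra_simps)
  have "pi * sin (pi * x) * (sin (pi * x) * Digamma (1 - x)) = pi * sin (pi * x) * (pi * cos (pi * x) + Digamma x * sin (pi * x))"
    using e s unfolding Gamma_reflection_real
    by (simp add: field_simps power2_eq_square)
  hence "sin (pi * x) * Digamma (1 - x) = pi * cos (pi * x) + Digamma x * sin (pi * x)"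
    using s pi_gt_zero by (subst (asm) mult_left_cancel) auto
  thus ?thesis using s by (simp add: field_simps)
qed

lemma Digamma_diff_sums:
  fixes a :: real
  assumes a: "0 < a" "a < 1"
  shows "(\<lambda>n. 2 * a / ((real n + 1)^2 - a^2)) sums (Digamma (1 + a) - Digamma (1 - a))"
proof -
  have s1: "(\<lambda>k. inverse (real (Suc k)) - inverse ((1 + a) + real k)) sums (Digamma (1 + a) + euler_mascheroni)"
    using summable_Digamma[of "1 + a"] a by (simp add: Digamma_def summable_sums)
  have s2: "(\<lambda>k. inverse (real (Suc k)) - inverse ((1 - a) + real k)) sums (Digamma (1 - a) + euler_mascheroni)"
    using summable_Digamma[of "1 - a"] a by (simp add: Digamma_def summable_sums)
  have "(\<lambda>k. (inverse (real (Suc k)) - inverse ((1 + a) + real k)) - (inverse (real (Suc k)) - inverse ((1 - a) + real k)))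
        sums ((Digamma (1 + a) + euler_mascheroni) - (Digamma (1 - a) + euler_mascheroni))"
    by (rule sums_diff[OF s1 s2])
  moreover have "(inverse (real (Suc k)) - inverse ((1 + a) + real k)) - (inverse (real (Suc k)) - inverse ((1 - a) + real k))
      = 2 * a / ((real k + 1)^2 - a^2)" for k
  proof -
    have p: "(1 - a) + real k > 0" "(1 + a) + real k > 0" using a by auto
    have e: "((1 - a) + real k) * ((1 + a) + real k) = (real k + 1)^2 - a^2" by (simp add: algebra_simps power2_eq_square)
    have "inverse ((1 - a) + real k) - inverse ((1 + a) + real k) = (((1 + a) + real k) - ((1 - a) + real k)) / (((1 - a) + real k) * ((1 + a) + real k))"
      using p by (simp add: field_simps)
    also have "\<dots> = 2 * a / ((real k + 1)^2 - a^2)" by (simp add: e)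
    finally show ?thesis by simp
  qed
  ultimately show ?thesis by simp
qed

lemma cot_series_pos:
  fixes a :: real
  assumes a: "0 < a" "a < 1"
  shows "cos (pi * a) * Gamma (1 + a) * Gamma (1 - a) = 1 - (\<Sum>n. 2 * a^2 / ((real n + 1)^2 - a^2))"
proof -
  have s: "sin (pi * a) > 0" using a by (intro sin_gt_zero) auto
  have "(\<lambda>n. a * (2 * a / ((real n + 1)^2 - a^2))) sums (a * (Digamma (1 + a) - Digamma (1 - a)))"
    by (rule sums_mult[OF Digamma_diff_sums[OF a]])
  hence sm: "(\<Sum>n. 2 * a^2 / ((real n + 1)^2 - a^2)) = a * (Digamma (1 + a) - Digamma (1 - a))"
    by (simp add: sums_iff power2_eq_square mult.assoc mult.left_commute)
  have "a \<notin> \<int>\<^sub>\<le>\<^sub>0" using a by (auto elim!: nonpos_Ints_cases)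
  hence g1: "Gamma (1 + a) = a * Gamma a" using Gamma_plus1[of a] by (simp add: add.commute)
  have d1: "Digamma (1 + a) = Digamma a + 1 / a" using Digamma_plus1[of a] a by (simp add: add.commute)
  have "cos (pi * a) * Gamma (1 + a) * Gamma (1 - a) = a * (pi * cos (pi * a) / sin (pi * a))"
    using Gamma_reflection_real[of a] s by (simp add: g1 field_simps)
  also have "\<dots> = a * (Digamma (1 - a) - Digamma a)" using Digamma_reflection_01[OF a] by simp
  also have "\<dots> = 1 - a * (Digamma (1 + a) - Digamma (1 - a))" using a by (simp add: d1 field_simps)
  finally show ?thesis using sm by simp
qed

lemma cot_series:
  fixes a :: real
  assumes a: "\<bar>a\<bar> < 1"
  shows "cos (pi * a) * Gamma (1 + a) * Gamma (1 - a) = 1 - (\<Sum>n. 2 * a^2 / ((real n + 1)^2 - a^2))"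
proof (cases "a = 0")
  case True thus ?thesis by simp
next
  case False
  show ?thesis
  proof (cases "a > 0")
    case True thus ?thesis using a cot_series_pos by auto
  next
    case False
    hence "0 < - a" "- a < 1" using \<open>a \<noteq> 0\<close> a by auto
    from cot_series_pos[OF this] show ?thesis by (simp add: mult_ac)
  qed
qed



lemma nn_to_set_integral:
  fixes f :: "real \<Rightarrow> real"
  assumes m: "set_borel_measurable lborel \<Omega> f" and nn: "\<And>x. x \<in> \<Omega> \<Longrightarrow> 0 \<le> f x"
    and I: "(\<integral>\<^sup>+x. ennreal (f x) * indicator \<Omega> x \<partial>lborel) = ennreal I" and I0: "0 \<le> I"
  shows "set_integrable lborel \<Omega> f" "(LINT x:\<Omega>|lborel. f x) = I"
proof -
  have "(\<integral>\<^sup>+x. ennreal (indicator \<Omega> x *\<^sub>R f x) \<partial>lborel) = (\<integral>\<^sup>+x. ennreal (f x) * indicator \<Omega> x \<partial>lborel)"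
    by (intro nn_integral_cong) (auto split: split_indicator)
  hence "has_bochner_integral lborel (\<lambda>x. indicator \<Omega> x *\<^sub>R f x) I"
    using m nn I0 I unfolding set_borel_measurable_def
    by (intro has_bochner_integral_nn_integral) (auto split: split_indicator)
  thus "set_integrable lborel \<Omega> f" "(LINT x:\<Omega>|lborel. f x) = I"
    unfolding set_integrable_def set_lebesgue_integral_def
    by (auto simp: has_bochner_integral_iff)
qed

lemma hk_to_set_integral:
  fixes f :: "real \<Rightarrow> real"
  assumes m: "set_borel_measurable lborel \<Omega> f" and nn: "\<And>x. x \<in> \<Omega> \<Longrightarrow> 0 \<le> f x"
    and I: "(f has_integral I) \<Omega>"
  shows "set_integrable lborel \<Omega> f" "(LINT x:\<Omega>|lborel. f x) = I"
proof -
  have I0: "0 \<le> I" using has_integral_nonneg[OF I] nn by auto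
  have "(\<integral>\<^sup>+x. ennreal (f x) * indicator \<Omega> x \<partial>lborel) = ennreal I"
    using nn_integral_has_integral_lebesgue'[OF nn I] by simp
  from nn_to_set_integral[OF m nn this I0] show "set_integrable lborel \<Omega> f" "(LINT x:\<Omega>|lborel. f x) = I" by auto
qed

lemma powr_sum_ge2:
  fixes x a :: real
  assumes "0 < x"
  shows "0 \<le> x powr a + x powr (-a) - 2"
proof -
  define t where "t = x powr a"
  have t: "t > 0" using assms by (simp add: t_def)
  have "x powr (-a) = 1 / t" using assms by (simp add: t_def powr_minus field_simps)
  moreover have "t + 1 / t - 2 = (t - 1)^2 / t" using t by (simp add: field_simps power2_eq_square)
  ultimately show ?thesis using t by (simp add: t_def)
qed

definition Jf :: "real \<Rightarrow> real \<Rightarrow> real" where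
  "Jf a x = (x powr a + x powr (-a) - 2) / (1 - x)^2"

lemma powr_Ioo_integral:
  fixes p :: real
  assumes "p > -1"
  shows "((\<lambda>x. x powr p) has_integral (1 / (p + 1))) {0<..<1}"
  using has_integral_powr_from_0[OF assms, of 1] by (simp add: has_integral_Icc_iff_Ioo)

lemma J_term_integral:
  fixes a :: real
  assumes a: "\<bar>a\<bar> < 1"
  shows "((\<lambda>x. (real n + 1) * x ^ n * (x powr a + x powr (-a) - 2)) has_integral
          (2 * a^2 / ((real n + 1)^2 - a^2))) {0<..<1}"
proof -
  have i1: "((\<lambda>x. x powr (real n + a)) has_integral (1 / (real n + a + 1))) {0<..<1}"
    using powr_Ioo_integral[of "real n + a"] a by auto
  have i2: "((\<lambda>x. x powr (real n - a)) has_integral (1 / (real n - a + 1))) {0<..<1}"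
    using powr_Ioo_integral[of "real n - a"] a by auto
  have i3: "((\<lambda>x. x powr (real n)) has_integral (1 / (real n + 1))) {0<..<1}"
    using powr_Ioo_integral[of "real n"] by auto
  have "((\<lambda>x. (real n + 1) * (x powr (real n + a) + x powr (real n - a) - 2 * x powr (real n))) has_integral
          ((real n + 1) * (1 / (real n + a + 1) + 1 / (real n - a + 1) - 2 * (1 / (real n + 1))))) {0<..<1}"
    by (intro has_integral_mult_right has_integral_diff has_integral_add has_integral_cmul i1 i2 i3)
  moreover have "(real n + 1) * (1 / (real n + a + 1) + 1 / (real n - a + 1) - 2 * (1 / (real n + 1)))
      = 2 * a^2 / ((real n + 1)^2 - a^2)"
  proof -
    have p: "real n + a + 1 > 0" "real n - a + 1 > 0" using a by auto
    have e: "(real n + a + 1) * (real n - a + 1) = (real n + 1)^2 - a^2" by (simp add: algebra_simps power2_eq_square)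
    have "(real n + 1) * (1 / (real n + a + 1) + 1 / (real n - a + 1) - 2 * (1 / (real n + 1)))
        = 2 * a^2 / ((real n + a + 1) * (real n - a + 1))"
    proof -
      define A where "A = real n + a + 1"
      define B where "B = real n - a + 1"
      have AB: "A > 0" "B > 0" using p by (auto simp: A_def B_def)
      have s: "A + B = 2 * (real n + 1)" "2 * (real n + 1)^2 - 2 * (A * B) = 2 * a^2"
        by (simp_all add: A_def B_def algebra_simps power2_eq_square)
      have "(real n + 1) * (1 / A + 1 / B - 2 * (1 / (real n + 1))) = ((real n + 1) * (A + B) - 2 * (A * B)) / (A * B)"
      proof -
        have f1: "1 / A + 1 / B = (A + B) / (A * B)" using AB by (simp add: field_simps)
        have np: "real n + 1 \<noteq> 0" by simp
        have f2: "(real n + 1) * (2 * (1 / (real n + 1))) = 2"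
          using np by (simp add: field_simps)
        have "(real n + 1) * (1 / A + 1 / B - 2 * (1 / (real n + 1))) = (real n + 1) * ((A + B) / (A * B)) - 2"
          by (simp only: f1 right_diff_distrib f2)
        also have "\<dots> = ((real n + 1) * (A + B) - 2 * (A * B)) / (A * B)" using AB by (simp add: field_simps)
        finally show ?thesis .
      qed
      also have "\<dots> = 2 * a^2 / (A * B)" using s by (simp add: power2_eq_square algebra_simps)
      finally show ?thesis by (simp add: A_def B_def)
    qed
    thus ?thesis by (simp add: e)
  qed
  ultimately have "((\<lambda>x. (real n + 1) * (x powr (real n + a) + x powr (real n - a) - 2 * x powr (real n))) has_integral
          (2 * a^2 / ((real n + 1)^2 - a^2))) {0<..<1}" by simp
  thus ?thesis
    by (rule has_integral_eq[rotated]) (auto simp: powr_add powr_diff powr_realpow algebra_simps powr_minus divide_inverse)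
qed

lemma c_summable:
  fixes a :: real
  assumes a: "\<bar>a\<bar> < 1"
  shows "summable (\<lambda>n. 2 * a^2 / ((real n + 1)^2 - a^2))"
proof (rule summable_comparison_test')
  show "summable (\<lambda>n. (2 / (1 - a^2)) * inverse ((real (Suc n))^2))"
    by (intro summable_mult) (subst summable_Suc_iff, simp add: inverse_power_summable)
next
  fix n :: nat
  have a2: "a^2 < 1" using a by (simp add: abs_square_less_1)
  have a20: "0 \<le> a^2" by simp
  have n1: "(real n + 1)^2 \<ge> 1" by simp
  have d: "(real n + 1)^2 - a^2 \<ge> (real n + 1)^2 * (1 - a^2)"
    using mult_right_mono[OF n1 a20] by (simp add: algebra_simps)
  have dp: "(real n + 1)^2 * (1 - a^2) > 0" using a2 by simp
  have "2 * a^2 / ((real n + 1)^2 - a^2) \<le> 2 / ((real n + 1)^2 - a^2)"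
  proof -
    have "a^2 \<le> (real n + 1)^2" using a2 n1 by linarith
    thus ?thesis using a2 by (intro divide_right_mono) auto
  qed
  also have "\<dots> \<le> 2 / ((real n + 1)^2 * (1 - a^2))"
    using d dp by (intro divide_left_mono) auto
  also have "\<dots> = (2 / (1 - a^2)) * inverse ((real (Suc n))^2)"
    by (simp add: field_simps)
  finally show "norm (2 * a^2 / ((real n + 1)^2 - a^2)) \<le> (2 / (1 - a^2)) * inverse ((real (Suc n))^2)"
    using d dp by simp
qed

lemma c_nonneg:
  fixes a :: real
  assumes a: "\<bar>a\<bar> < 1"
  shows "0 \<le> 2 * a^2 / ((real n + 1)^2 - a^2)"
proof -
  have "a^2 < 1" using a by (simp add: abs_square_less_1)
  moreover have "(real n + 1)^2 \<ge> 1" by simp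
  ultimately have "a^2 \<le> (real n + 1)^2" by linarith
  thus ?thesis by (intro divide_nonneg_nonneg) auto
qed

lemma J_integral:
  fixes a :: real
  assumes a: "\<bar>a\<bar> < 1"
  shows "set_integrable lborel {0<..<1} (Jf a)"
    "(LINT x:{0<..<1}|lborel. Jf a x) = (\<Sum>n. 2 * a^2 / ((real n + 1)^2 - a^2))"
proof -
  define T where "T n x = (real n + 1) * x ^ n * (x powr a + x powr (-a) - 2)" for n x
  define c where "c n = 2 * a^2 / ((real n + 1)^2 - a^2)" for n
  have m: "set_borel_measurable lborel {0<..<1} (Jf a)"
    unfolding set_borel_measurable_def Jf_def by measurable
  have Tnn: "0 \<le> T n x" if "x \<in> {0<..<1}" for n x
    using that powr_sum_ge2[of x a] by (auto simp: T_def)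
  have Jnn: "0 \<le> Jf a x" if "x \<in> {0<..<1}" for x
    using that powr_sum_ge2[of x a] by (auto simp: Jf_def)
  have Tsums: "(\<lambda>n. T n x) sums Jf a x" if "x \<in> {0<..<1}" for x
  proof -
    have "norm x < 1" using that by auto
    from sums_mult2[OF geometric_deriv_sums[OF this], of "x powr a + x powr (-a) - 2"]
    show ?thesis by (simp add: T_def Jf_def add.commute)
  qed
  have "(\<integral>\<^sup>+x. ennreal (Jf a x) * indicator {0<..<1} x \<partial>lborel)
      = (\<integral>\<^sup>+x. (\<Sum>n. ennreal (T n x) * indicator {0<..<1} x) \<partial>lborel)"
  proof (intro nn_integral_cong)
    fix x :: real
    show "ennreal (Jf a x) * indicator {0<..<1} x = (\<Sum>n. ennreal (T n x) * indicator {0<..<1} x)"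
    proof (cases "x \<in> {0<..<1}")
      case True
      have "(\<Sum>n. ennreal (T n x)) = ennreal (\<Sum>n. T n x)"
        using Tnn[OF True] Tsums[OF True] by (intro suminf_ennreal2) (auto simp: sums_iff)
      also have "(\<Sum>n. T n x) = Jf a x" using Tsums[OF True] by (simp add: sums_iff)
      finally show ?thesis using True by simp
    qed simp
  qed
  also have "\<dots> = (\<Sum>n. \<integral>\<^sup>+x. ennreal (T n x) * indicator {0<..<1} x \<partial>lborel)"
    by (intro nn_integral_suminf) (unfold T_def, measurable)
  also have "\<dots> = (\<Sum>n. ennreal (c n))"
  proof (intro suminf_cong)
    fix n
    show "(\<integral>\<^sup>+x. ennreal (T n x) * indicator {0<..<1} x \<partial>lborel) = ennreal (c n)"
      using nn_integral_has_integral_lebesgue'[OF Tnn J_term_integral[OF a, of n, folded T_def]]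
      by (simp add: c_def)
  qed
  also have "\<dots> = ennreal (\<Sum>n. c n)"
    using c_summable[OF a] c_nonneg[OF a] by (intro suminf_ennreal2) (auto simp: c_def)
  finally have I: "(\<integral>\<^sup>+x. ennreal (Jf a x) * indicator {0<..<1} x \<partial>lborel) = ennreal (\<Sum>n. c n)" .
  have I0: "0 \<le> (\<Sum>n. c n)"
    using c_summable[OF a] c_nonneg[OF a] by (intro suminf_nonneg) (auto simp: c_def)
  from nn_to_set_integral[OF m Jnn I I0]
  show "set_integrable lborel {0<..<1} (Jf a)"
    "(LINT x:{0<..<1}|lborel. Jf a x) = (\<Sum>n. 2 * a^2 / ((real n + 1)^2 - a^2))"
    by (simp_all add: c_def)
qed



lemma phi_nonneg:
  fixes x q :: real
  assumes x: "0 < x" and q: "1 \<le> q"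
  shows "0 \<le> x powr q - 1 - q * (x - 1)"
proof -
  have D: "DERIV (\<lambda>t. t powr q) t :> q * t powr (q - 1)" if "t > 0" for t
    using that by (auto intro!: derivative_eq_intros)
  consider "x = 1" | "x < 1" | "x > 1" by linarith
  thus ?thesis
  proof cases
    case 1 thus ?thesis by simp
  next
    case 2
    from MVT2[OF 2, of "\<lambda>t. t powr q" "\<lambda>t. q * t powr (q - 1)"] D x
    obtain z where z: "x < z" "z < 1" "1 powr q - x powr q = (1 - x) * (q * z powr (q - 1))" by force
    have "z powr (q - 1) \<le> 1 powr (q - 1)" using z x q by (intro powr_mono2) auto
    hence "z powr (q - 1) \<le> 1" by simp
    hence "(1 - x) * (q * z powr (q - 1)) \<le> (1 - x) * q" using 2 q
      by (intro mult_left_mono) (auto intro: mult_left_le)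
    thus ?thesis using z by (simp add: algebra_simps)
  next
    case 3
    from MVT2[OF 3, of "\<lambda>t. t powr q" "\<lambda>t. q * t powr (q - 1)"] D x
    obtain z where z: "1 < z" "z < x" "x powr q - 1 powr q = (x - 1) * (q * z powr (q - 1))" by force
    have "1 powr (q - 1) \<le> z powr (q - 1)" using z q by (intro powr_mono2) auto
    hence "1 \<le> z powr (q - 1)" by simp
    hence "(x - 1) * q \<le> (x - 1) * (q * z powr (q - 1))" using 3 q
      by (intro mult_left_mono) (auto intro: mult_le_cancel_left1)
    thus ?thesis using z by (simp add: algebra_simps)
  qed
qed

definition H1 :: "real \<Rightarrow> real \<Rightarrow> real" where
  "H1 a x = (x powr (a + 2) - 1 - (a + 2) * (x - 1)) / (x^2 * (x - 1)^2)"
definition H2 :: "real \<Rightarrow> real \<Rightarrow> real" where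
  "H2 a x = (x powr (-a) - x^2 - (a + 2) * x + (a + 2) * x^2) / (1 - x)^2"
definition H3 :: "real \<Rightarrow> real \<Rightarrow> real" where
  "H3 a x = x powr a / (1 - x)^2"

lemma H1_nonneg: "\<bar>a\<bar> < 1 \<Longrightarrow> 0 < x \<Longrightarrow> 0 \<le> H1 a x"
  unfolding H1_def using phi_nonneg[of x "a + 2"] by auto

lemma H3_nonneg: "0 \<le> H3 a x"
  unfolding H3_def by auto

lemma H2_alt:
  assumes x: "0 < x"
  shows "H2 a x = x^2 * ((1/x) powr (a + 2) - 1 - (a + 2) * (1/x - 1)) / (1 - x)^2"
proof -
  have "x^2 * (1/x) powr (a + 2) = x powr (-a)"
    using x by (simp add: powr_divide powr_add powr_minus field_simps power2_eq_square)
  hence "x^2 * ((1/x) powr (a + 2) - 1 - (a + 2) * (1/x - 1)) = x powr (-a) - x^2 - (a + 2) * x + (a + 2) * x^2"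
    using x by (simp add: algebra_simps power2_eq_square)
  thus ?thesis unfolding H2_def by simp
qed

lemma H2_nonneg: "\<bar>a\<bar> < 1 \<Longrightarrow> 0 < x \<Longrightarrow> 0 \<le> H2 a x"
  using H2_alt[of x a] phi_nonneg[of "1/x" "a + 2"] by auto

lemma div_split3:
  fixes A B C D :: real
  assumes "D \<noteq> 0"
  shows "(A + B * D + C) / D = A / D + B + C / D"
  using assms by (simp add: field_simps)

lemma D1:
  assumes x: "0 < x" "x < 1"
  shows "H2 a x + H3 a x = Jf a x + (a + 1) + (1 + a * (x - 1)) / (1 - x)^2"
proof -
  have nz: "(1 - x)^2 \<noteq> 0" using x by simp
  have gen: "(M - x^2 - (a + 2) * x + (a + 2) * x^2) / (1 - x)^2 + P / (1 - x)^2
     = (P + M - 2) / (1 - x)^2 + (a + 1) + (1 + a * (x - 1)) / (1 - x)^2" for P M :: real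
  proof -
    have "(M - x^2 - (a + 2) * x + (a + 2) * x^2) + P = (P + M - 2) + (a + 1) * (1 - x)^2 + (1 + a * (x - 1))"
      by (simp add: algebra_simps power2_eq_square)
    hence "((M - x^2 - (a + 2) * x + (a + 2) * x^2) + P) / (1 - x)^2 = ((P + M - 2) + (a + 1) * (1 - x)^2 + (1 + a * (x - 1))) / (1 - x)^2"
      by simp
    also have "\<dots> = (P + M - 2) / (1 - x)^2 + (a + 1) + (1 + a * (x - 1)) / (1 - x)^2"
      by (rule div_split3[OF nz])
    finally show ?thesis by (simp only: add_divide_distrib[symmetric])
  qed
  show ?thesis unfolding H2_def H3_def Jf_def by (rule gen)
qed

lemma D2:
  assumes x: "0 < x" "x < 1"
  shows "H2 a x + H1 a x = Jf a x + (a + 1) + (a * x + a + 1) / x^2"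
proof -
  have nz: "(1 - x)^2 \<noteq> 0" "x \<noteq> 0" using x by auto
  have nz3: "(x - 1)^2 = (1 - x)^2" by (simp add: power2_eq_square algebra_simps)
  have p: "x powr (a + 2) = x^2 * x powr a" using x by (simp add: powr_add power2_eq_square)
  have gen: "(M - x^2 - (a + 2) * x + (a + 2) * x^2) / (1 - x)^2 + (x^2 * P - 1 - (a + 2) * (x - 1)) / (x^2 * (1 - x)^2)
     = (P + M - 2) / (1 - x)^2 + (a + 1) + (a * x + a + 1) / x^2" for P M :: real
  proof -
    have "x^2 * (M - x^2 - (a + 2) * x + (a + 2) * x^2) + (x^2 * P - 1 - (a + 2) * (x - 1))
        = x^2 * (P + M - 2) + (a + 1) * (x^2 * (1 - x)^2) + (a * x + a + 1) * (1 - x)^2"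
      by (simp add: algebra_simps power2_eq_square)
    hence "(x^2 * (M - x^2 - (a + 2) * x + (a + 2) * x^2) + (x^2 * P - 1 - (a + 2) * (x - 1))) / (x^2 * (1 - x)^2)
        = (x^2 * (P + M - 2) + (a + 1) * (x^2 * (1 - x)^2) + (a * x + a + 1) * (1 - x)^2) / (x^2 * (1 - x)^2)"
      by simp
    thus ?thesis using nz by (simp add: add_divide_distrib)
  qed
  show ?thesis unfolding H2_def H1_def Jf_def p nz3 by (rule gen)
qed



lemma ftc_real:
  fixes F f :: "real \<Rightarrow> real"
  assumes "a \<le> b" "\<And>x. x \<in> {a..b} \<Longrightarrow> (F has_real_derivative f x) (at x)"
  shows "(f has_integral (F b - F a)) {a..b}"
  using assms
  by (intro fundamental_theorem_of_calculus)
     (auto simp: has_real_derivative_iff_has_vector_derivative[symmetric] intro: has_field_derivative_at_within)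

lemma dominated_integrable:
  fixes f g :: "real \<Rightarrow> real"
  assumes "continuous_on S f" "S \<in> sets lebesgue" "g integrable_on S" "\<And>x. x \<in> S \<Longrightarrow> 0 \<le> f x \<and> f x \<le> g x"
  shows "f integrable_on S"
proof -
  have "f absolutely_integrable_on S"
    using assms by (intro measurable_bounded_by_integrable_imp_absolutely_integrable[where g = g]
        continuous_imp_measurable_on_sets_lebesgue) auto
  thus ?thesis using set_lebesgue_integral_eq_integral(1) by blast
qed

lemma g1_integral:
  fixes a :: real
  shows "((\<lambda>x. (1 + a * (x - 1)) / (1 - x)^2) has_integral (1 - a * ln 2)) {0..1/2}"
proof -
  have "((\<lambda>x. (1 + a * (x - 1)) / (1 - x)^2) has_integral
      ((\<lambda>x. 1 / (1 - x) + a * ln (1 - x)) (1/2) - (\<lambda>x. 1 / (1 - x) + a * ln (1 - x)) 0)) {0..1/2}"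
  proof (rule ftc_real)
    fix x :: real assume x: "x \<in> {0..1/2}"
    hence nz: "1 - x \<noteq> 0" "1 - x > 0" by auto
    have e1: "a / (1 - x) = a * (1 - x) / (1 - x)^2" using nz by (simp add: power2_eq_square)
    have e: "(1 + a * (x - 1)) / (1 - x)^2 = 1 / (1 - x)^2 + a * (- 1 / (1 - x))"
    proof -
      have "(1 + a * (x - 1)) / (1 - x)^2 = (1 - a * (1 - x)) / (1 - x)^2" by (simp add: algebra_simps)
      also have "\<dots> = 1 / (1 - x)^2 - a * (1 - x) / (1 - x)^2" by (simp add: diff_divide_distrib)
      also have "\<dots> = 1 / (1 - x)^2 - a / (1 - x)" by (simp add: e1)
      finally show ?thesis by simp
    qed
    have "((\<lambda>x. 1 / (1 - x) + a * ln (1 - x)) has_real_derivative 1 / (1 - x)^2 + a * (- 1 / (1 - x))) (at x)"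
      using nz by (auto intro!: derivative_eq_intros simp: power2_eq_square)
    thus "((\<lambda>x. 1 / (1 - x) + a * ln (1 - x)) has_real_derivative (1 + a * (x - 1)) / (1 - x)^2) (at x)"
      by (simp only: e)
  qed auto
  moreover have "(\<lambda>x. 1 / (1 - x) + a * ln (1 - x)) (1/2) - (\<lambda>x. 1 / (1 - x) + a * ln (1 - x)) 0 = 1 - a * ln 2"
    by (simp add: ln_div)
  ultimately show ?thesis by simp
qed

lemma g2_integral:
  fixes a :: real
  shows "((\<lambda>x. (a * x + a + 1) / x^2) has_integral ((a + 1) + a * ln 2)) {1/2..1}"
proof -
  have "((\<lambda>x. (a * x + a + 1) / x^2) has_integral
      ((\<lambda>x. a * ln x - (a + 1) / x) 1 - (\<lambda>x. a * ln x - (a + 1) / x) (1/2))) {1/2..1}"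
  proof (rule ftc_real)
    fix x :: real assume x: "x \<in> {1/2..1}"
    hence nz: "x \<noteq> 0" "x > 0" by auto
    show "((\<lambda>x. a * ln x - (a + 1) / x) has_real_derivative (a * x + a + 1) / x^2) (at x)"
      using nz by (auto intro!: derivative_eq_intros simp: field_simps power2_eq_square)
  qed auto
  moreover have "(\<lambda>x. a * ln x - (a + 1) / x) 1 - (\<lambda>x. a * ln x - (a + 1) / x) (1/2) = (a + 1) + a * ln 2"
  proof -
    have "ln (1/2::real) = - ln 2" by (simp add: ln_div)
    thus ?thesis by simp
  qed
  ultimately show ?thesis by metis
qed

lemma J_hk:
  fixes a :: real
  assumes a: "\<bar>a\<bar> < 1"
  shows "(Jf a has_integral (\<Sum>n. 2 * a^2 / ((real n + 1)^2 - a^2))) {0..1}"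
proof -
  note J = J_integral[OF a]
  have "Jf a integrable_on {0<..<1}" "(LINT x:{0<..<1}|lborel. Jf a x) = integral {0<..<1} (Jf a)"
    using set_borel_integral_eq_integral[OF J(1)] by auto
  hence "(Jf a has_integral (\<Sum>n. 2 * a^2 / ((real n + 1)^2 - a^2))) {0<..<1}"
    using J(2) by (metis has_integral_integrable_integral)
  thus ?thesis by (simp add: has_integral_Icc_iff_Ioo)
qed

lemma H_cont:
  shows "continuous_on {0<..<1} (H2 a)" "continuous_on {0<..<1} (H3 a)" "continuous_on {0<..<1} (H1 a)"
  unfolding H1_def H2_def H3_def
  by (auto intro!: continuous_intros)

lemma H_hk:
  fixes a :: real
  assumes a: "\<bar>a\<bar> < 1"
  obtains I1 I2 I3 where "(H1 a has_integral I1) {1/2<..<1}" "(H2 a has_integral I2) {0<..<1}"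
    "(H3 a has_integral I3) {0<..<1/2}"
    "I1 + I2 + I3 = (\<Sum>n. 2 * a^2 / ((real n + 1)^2 - a^2)) + 2 * a + 3"
proof -
  define S where "S = (\<Sum>n. 2 * a^2 / ((real n + 1)^2 - a^2))"
  have J: "(Jf a has_integral S) {0..1}" using J_hk[OF a] by (simp add: S_def)
  have Ji: "Jf a integrable_on {0..1}" using J by blast
  define SJ1 where "SJ1 = integral {0..1/2} (Jf a)"
  define SJ2 where "SJ2 = integral {1/2..1} (Jf a)"
  have SJ: "SJ1 + SJ2 = S" unfolding SJ1_def SJ2_def
    using Henstock_Kurzweil_Integration.integral_combine[OF _ _ Ji, of "1/2"] J by (simp add: integral_unique)
  have J1: "(Jf a has_integral SJ1) {0..1/2}" unfolding SJ1_def
    by (rule integrable_integral, rule integrable_subinterval_real[OF Ji]) auto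
  have J2: "(Jf a has_integral SJ2) {1/2..1}" unfolding SJ2_def
    by (rule integrable_integral, rule integrable_subinterval_real[OF Ji]) auto
  define V1 where "V1 = SJ1 + (1/2) * (a + 1) + (1 - a * ln 2)"
  define V2 where "V2 = SJ2 + (1/2) * (a + 1) + ((a + 1) + a * ln 2)"
  have K1: "((\<lambda>x. Jf a x + (a + 1) + (1 + a * (x - 1)) / (1 - x)^2) has_integral V1) {0..1/2}"
    unfolding V1_def
    by (intro has_integral_add J1 g1_integral) (use has_integral_const_real[of "a + 1" 0 "1/2"] in simp)
  have K2: "((\<lambda>x. Jf a x + (a + 1) + (a * x + a + 1) / x^2) has_integral V2) {1/2..1}"
    unfolding V2_def
    by (intro has_integral_add J2 g2_integral) (use has_integral_const_real[of "a + 1" "1/2" 1] in simp)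
  have L1: "((\<lambda>x. H2 a x + H3 a x) has_integral V1) {0<..<1/2}"
    using K1 unfolding has_integral_Icc_iff_Ioo
    by (rule has_integral_eq[rotated]) (use D1 in auto)
  have L2: "((\<lambda>x. H2 a x + H1 a x) has_integral V2) {1/2<..<1}"
    using K2 unfolding has_integral_Icc_iff_Ioo
    by (rule has_integral_eq[rotated]) (use D2 in auto)
  have leb1: "{0<..<1/2::real} \<in> sets lebesgue" "{1/2<..<1::real} \<in> sets lebesgue" by auto
  have i21: "H2 a integrable_on {0<..<1/2}"
    by (rule dominated_integrable[OF continuous_on_subset[OF H_cont(1)] leb1(1)])
       (use L1 H2_nonneg[OF a] H3_nonneg in auto)
  have i3: "H3 a integrable_on {0<..<1/2}"
    by (rule dominated_integrable[OF continuous_on_subset[OF H_cont(2)] leb1(1)])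
       (use L1 H2_nonneg[OF a] H3_nonneg in auto)
  have i22: "H2 a integrable_on {1/2<..<1}"
    by (rule dominated_integrable[OF continuous_on_subset[OF H_cont(1)] leb1(2)])
       (use L2 H2_nonneg[OF a] H1_nonneg[OF a] in auto)
  have i1: "H1 a integrable_on {1/2<..<1}"
    by (rule dominated_integrable[OF continuous_on_subset[OF H_cont(3)] leb1(2)])
       (use L2 H2_nonneg[OF a] H1_nonneg[OF a] in auto)
  define I21 where "I21 = integral {0<..<1/2} (H2 a)"
  define I22 where "I22 = integral {1/2<..<1} (H2 a)"
  define I1 where "I1 = integral {1/2<..<1} (H1 a)"
  define I3 where "I3 = integral {0<..<1/2} (H3 a)"
  have e1: "I21 + I3 = V1"
    using has_integral_unique[OF has_integral_add[OF integrable_integral[OF i21] integrable_integral[OF i3]] L1]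
    by (simp add: I21_def I3_def)
  have e2: "I22 + I1 = V2"
    using has_integral_unique[OF has_integral_add[OF integrable_integral[OF i22] integrable_integral[OF i1]] L2]
    by (simp add: I22_def I1_def)
  have h21: "(H2 a has_integral I21) {0..1/2}"
    using integrable_integral[OF i21] unfolding I21_def has_integral_Icc_iff_Ioo .
  have h22: "(H2 a has_integral I22) {1/2..1}"
    using integrable_integral[OF i22] unfolding I22_def has_integral_Icc_iff_Ioo .
  have h2: "(H2 a has_integral (I21 + I22)) {0..1}"
    by (rule has_integral_combine[OF _ _ h21 h22]) auto
  show ?thesis
  proof (rule that)
    show "(H1 a has_integral I1) {1/2<..<1}" using integrable_integral[OF i1] by (simp add: I1_def)
    show "(H3 a has_integral I3) {0<..<1/2}" using integrable_integral[OF i3] by (simp add: I3_def)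
    show "(H2 a has_integral (I21 + I22)) {0<..<1}" using h2 by (simp add: has_integral_Icc_iff_Ioo)
    show "I1 + (I21 + I22) + I3 = (\<Sum>n. 2 * a^2 / ((real n + 1)^2 - a^2)) + 2 * a + 3"
    proof -
      have "I1 + (I21 + I22) + I3 = (I21 + I3) + (I22 + I1)" by simp
      also have "\<dots> = (SJ1 + SJ2) + 2 * a + 3" using e1 e2 unfolding V1_def V2_def by (simp add: field_simps)
      finally show ?thesis using SJ unfolding S_def by simp
    qed
  qed
qed



definition Pf :: "real \<Rightarrow> real \<Rightarrow> real" where
  "Pf q y = (exp (q * y) - 1 - q * (exp y - 1)) * levy_density y"
definition Rf :: "real \<Rightarrow> real \<Rightarrow> real" where
  "Rf q y = ((1 - exp y) powr q) * levy_density y"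

lemma levy_density_pos_formula:
  "y > - ln 2 \<Longrightarrow> levy_density y = (2 / pi) * exp (- y) / (exp y - 1)^2"
  by (simp add: levy_density_def)

lemma levy_density_nonneg: "0 \<le> levy_density y"
  by (simp add: levy_density_def)

lemma isCont_levy_density:
  assumes "y > - ln 2" "y \<noteq> 0"
  shows "isCont levy_density y"
proof -
  have ev: "eventually (\<lambda>z. levy_density z = (2 / pi) * exp (- z) / (exp z - 1)^2) (nhds y)"
    using eventually_nhds_in_open[of "{- ln 2<..}" y] assms
    by (auto elim!: eventually_mono simp: levy_density_def)
  have "exp y - 1 \<noteq> 0" using assms by simp
  hence "isCont (\<lambda>z. (2 / pi) * exp (- z) / (exp z - 1)^2) y"
    by (auto intro!: continuous_intros)
  thus ?thesis using isCont_cong[OF ev] by simp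
qed

lemma ln_gt_mln2: "1/2 < x \<Longrightarrow> - ln 2 < ln (x::real)"
proof -
  assume x: "1/2 < x"
  have "ln (1/2) < ln x" using x by (subst ln_less_cancel_iff) auto
  thus ?thesis by (simp add: ln_div)
qed

lemma pt1:
  assumes x: "1/2 < x" "x < 1"
  shows "Pf (a + 2) (ln x) * (1 / x) = (2 / pi) * H1 a x"
proof -
  have x0: "x > 0" using x by simp
  have ld: "levy_density (ln x) = (2 / pi) * (1 / x) / (x - 1)^2"
    using levy_density_pos_formula[OF ln_gt_mln2[OF x(1)]] x0 by (simp add: exp_minus inverse_eq_divide)
  have e: "exp ((a + 2) * ln x) = x powr (a + 2)" using x0 by (simp add: powr_def)
  show ?thesis unfolding Pf_def H1_def ld e using x0 by (simp add: field_simps power2_eq_square)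
qed

lemma pt2:
  assumes u: "0 < u" "u < 1"
  shows "Pf (a + 2) (- ln u) * (1 / u) = (2 / pi) * H2 a u"
proof -
  have "- ln (2::real) < 0" by simp
  moreover have "0 < - ln u" using u by simp
  ultimately have gt: "- ln 2 < - ln u" by linarith
  have ld: "levy_density (- ln u) = (2 / pi) * u / (1 / u - 1)^2"
    using levy_density_pos_formula[OF gt] u by (simp add: exp_minus inverse_eq_divide)
  have e: "exp ((a + 2) * - ln u) = u powr (- (a + 2))" using u by (simp add: powr_def algebra_simps)
  have e2: "u powr (- (a + 2)) * u^2 = u powr (- a)"
  proof -
    have "u^2 = u powr 2" using u by (simp add: powr_realpow)
    hence "u powr (- (a + 2)) * u^2 = u powr (- (a + 2) + 2)" by (simp only: powr_add)
    also have "- (a + 2) + 2 = - a" by simp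
    finally show ?thesis .
  qed
  have d: "(1 / u - 1)^2 = (1 - u)^2 / u^2" using u by (simp add: field_simps power2_eq_square)
  have nz: "u \<noteq> 0" "(1 - u)^2 \<noteq> 0" using u by auto
  have ex: "exp (- ln u) = 1 / u" using u by (simp add: exp_minus inverse_eq_divide)
  have "Pf (a + 2) (- ln u) * (1 / u) = (u powr (- (a + 2)) - 1 - (a + 2) * (1 / u - 1)) * ((2 / pi) * u / ((1 - u)^2 / u^2)) * (1 / u)"
    unfolding Pf_def ld e d ex by simp
  also have "\<dots> = (2 / pi) * ((u powr (- (a + 2)) - 1 - (a + 2) * (1 / u - 1)) * (u * (1 / u)) * (u^2 / (1 - u)^2))"
    by (simp add: divide_inverse mult_ac)
  also have "\<dots> = (2 / pi) * ((u powr (- (a + 2)) - 1 - (a + 2) * (1 / u - 1)) * u^2 / (1 - u)^2)"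
    using nz by simp
  also have "(u powr (- (a + 2)) - 1 - (a + 2) * (1 / u - 1)) * u^2 = u powr (- a) - u^2 - (a + 2) * u + (a + 2) * u^2"
    using e2 nz by (simp add: algebra_simps power2_eq_square)
  finally show ?thesis by (simp add: H2_def)
qed

lemma pt3:
  assumes t: "0 < t" "t < 1/2"
  shows "Rf (a + 2) (ln (1 - t)) * (1 / (1 - t)) = (2 / pi) * H3 a t"
proof -
  have gt: "- ln 2 < ln (1 - t)" using t by (intro ln_gt_mln2) auto
  have ld: "levy_density (ln (1 - t)) = (2 / pi) * (1 / (1 - t)) / t^2"
    using levy_density_pos_formula[OF gt] t by (simp add: exp_minus inverse_eq_divide power2_eq_square)
  have e: "(1 - exp (ln (1 - t))) powr (a + 2) = t^2 * t powr a"
    using t by (simp add: powr_add power2_eq_square)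
  have nz: "t \<noteq> 0" "1 - t \<noteq> 0" using t by auto
  have "Rf (a + 2) (ln (1 - t)) * (1 / (1 - t)) = t^2 * t powr a * ((2 / pi) * (1 / (1 - t)) / t^2) * (1 / (1 - t))"
    unfolding Rf_def ld e by simp
  also have "\<dots> = (2 / pi) * t powr a * (t^2 / t^2) * (1 / (1 - t) * (1 / (1 - t)))"
    by (simp add: divide_inverse mult_ac)
  also have "\<dots> = (2 / pi) * (t powr a / (1 - t)^2)" using nz by (simp add: power2_eq_square)
  finally show ?thesis by (simp add: H3_def)
qed



lemma H_leb:
  fixes a :: real
  assumes a: "\<bar>a\<bar> < 1"
  obtains I1 I2 I3 where
    "set_integrable lborel {1/2<..<1} (H1 a)" "(LINT x:{1/2<..<1}|lborel. H1 a x) = I1"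
    "set_integrable lborel {0<..<1} (H2 a)" "(LINT x:{0<..<1}|lborel. H2 a x) = I2"
    "set_integrable lborel {0<..<1/2} (H3 a)" "(LINT x:{0<..<1/2}|lborel. H3 a x) = I3"
    "I1 + I2 + I3 = (\<Sum>n. 2 * a^2 / ((real n + 1)^2 - a^2)) + 2 * a + 3"
proof -
  obtain I1 I2 I3 where h: "(H1 a has_integral I1) {1/2<..<1}" "(H2 a has_integral I2) {0<..<1}"
    "(H3 a has_integral I3) {0<..<1/2}"
    "I1 + I2 + I3 = (\<Sum>n. 2 * a^2 / ((real n + 1)^2 - a^2)) + 2 * a + 3"
    using H_hk[OF a] by blast
  have m1: "set_borel_measurable lborel {1/2<..<1} (H1 a)"
    unfolding set_borel_measurable_def H1_def by measurable
  have m2: "set_borel_measurable lborel {0<..<1} (H2 a)"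
    unfolding set_borel_measurable_def H2_def by measurable
  have m3: "set_borel_measurable lborel {0<..<1/2} (H3 a)"
    unfolding set_borel_measurable_def H3_def by measurable
  note r1 = hk_to_set_integral[OF m1 _ h(1)] and r2 = hk_to_set_integral[OF m2 _ h(2)]
    and r3 = hk_to_set_integral[OF m3 _ h(3)]
  show ?thesis
    by (rule that[of I1 I2 I3], insert r1 r2 r3 h(4) H1_nonneg[OF a] H2_nonneg[OF a] H3_nonneg) auto
qed

lemma sub1:
  fixes a :: real
  assumes a: "\<bar>a\<bar> < 1" and int: "set_integrable lborel {1/2<..<1} (H1 a)"
  shows "set_integrable lborel {- ln 2<..<0} (Pf (a + 2))"
    "(LINT y:{- ln 2<..<0}|lborel. Pf (a + 2) y) = (2 / pi) * (LINT x:{1/2<..<1}|lborel. H1 a x)"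
proof -
  have int_fg: "set_integrable lborel (einterval (ereal (1/2)) (ereal 1)) (\<lambda>x. Pf (a + 2) (ln x) * (1 / x))"
  proof -
    have "set_integrable lborel {1/2<..<1} (\<lambda>x. (2 / pi) * H1 a x)" using int by simp
    moreover have "(2 / pi) * H1 a x = Pf (a + 2) (ln x) * (1 / x)" if "x \<in> {1/2<..<1}" for x
      using that by (intro pt1[symmetric]) auto
    ultimately show ?thesis using set_integrable_cong[OF refl refl, of "{1/2<..<1}" "\<lambda>x. (2 / pi) * H1 a x"
        "\<lambda>x. Pf (a + 2) (ln x) * (1 / x)" lborel] by simp
  qed
  have nn: "0 \<le> Pf (a + 2) (ln x)" if "1/2 < x" "x < 1" for x
  proof -
    have "Pf (a + 2) (ln x) = (Pf (a + 2) (ln x) * (1 / x)) * x" using that by simp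
    also have "\<dots> = (2 / pi) * H1 a x * x" using pt1[OF that] by simp
    finally show ?thesis using H1_nonneg[OF a, of x] that by simp
  qed
  have cont: "isCont (Pf (a + 2)) (ln x)" if "1/2 < x" "x < 1" for x
  proof -
    have "isCont levy_density (ln x)" using that by (intro isCont_levy_density ln_gt_mln2) auto
    thus ?thesis unfolding Pf_def by (auto intro!: continuous_intros)
  qed
  have lim1: "((ereal \<circ> ln \<circ> real_of_ereal) \<longlongrightarrow> ereal (- ln 2)) (at_right (ereal (1/2)))"
  proof -
    have "(ln \<longlongrightarrow> ln (1/2)) (at_right (1/2::real))"
      by (intro tendsto_intros) auto
    hence "(ln \<longlongrightarrow> - ln 2) (at_right (1/2::real))" by (simp add: ln_div)
    thus ?thesis by (simp add: ereal_tendsto_simps)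
  qed
  have lim2: "((ereal \<circ> ln \<circ> real_of_ereal) \<longlongrightarrow> ereal 0) (at_left (ereal 1))"
  proof -
    have "(ln \<longlongrightarrow> ln 1) (at_left (1::real))"
      by (intro tendsto_intros) auto
    thus ?thesis by (simp add: ereal_tendsto_simps)
  qed
  note S = interval_integral_substitution_nonneg[of "ereal (1/2)" "ereal 1" ln "\<lambda>x. 1 / x" "Pf (a + 2)"
      "ereal (- ln 2)" "ereal 0"]
  have hyps: "ereal (1/2) < ereal 1"
    "\<And>x. ereal (1/2) < ereal x \<Longrightarrow> ereal x < ereal 1 \<Longrightarrow> DERIV ln x :> 1 / x"
    "\<And>x. ereal (1/2) < ereal x \<Longrightarrow> ereal x < ereal 1 \<Longrightarrow> isCont (Pf (a + 2)) (ln x)"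
    "\<And>x. ereal (1/2) < ereal x \<Longrightarrow> ereal x < ereal 1 \<Longrightarrow> isCont (\<lambda>x. 1 / x) x"
    "\<And>x. ereal (1/2) < ereal x \<Longrightarrow> ereal x < ereal 1 \<Longrightarrow> 0 \<le> Pf (a + 2) (ln x)"
    "\<And>x. ereal (1/2) \<le> ereal x \<Longrightarrow> ereal x \<le> ereal 1 \<Longrightarrow> 0 \<le> 1 / x"
    using cont nn by (auto intro!: derivative_eq_intros continuous_intros)
  note S' = S[OF hyps lim1 lim2 int_fg]
  show "set_integrable lborel {- ln 2<..<0} (Pf (a + 2))" using S'(1) by simp
  have "(LINT y:{- ln 2<..<0}|lborel. Pf (a + 2) y) = (LBINT x=ereal (- ln 2)..ereal 0. Pf (a + 2) x)"
    by (simp add: interval_lebesgue_integral_le_eq)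
  also have "\<dots> = (LBINT x=ereal (1/2)..ereal 1. Pf (a + 2) (ln x) * (1 / x))" by (rule S'(2))
  also have "\<dots> = (LINT x:{1/2<..<1}|lborel. Pf (a + 2) (ln x) * (1 / x))"
    by (simp add: interval_lebesgue_integral_le_eq)
  also have "\<dots> = (LINT x:{1/2<..<1}|lborel. (2 / pi) * H1 a x)"
    by (rule set_lebesgue_integral_cong) (use pt1 in simp_all)
  also have "\<dots> = (2 / pi) * (LINT x:{1/2<..<1}|lborel. H1 a x)" by simp
  finally show "(LINT y:{- ln 2<..<0}|lborel. Pf (a + 2) y) = (2 / pi) * (LINT x:{1/2<..<1}|lborel. H1 a x)" .
qed

lemma sub2:
  fixes a :: real
  assumes a: "\<bar>a\<bar> < 1" and int: "set_integrable lborel {0<..<1} (H2 a)"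
  shows "set_integrable lborel {0<..} (Pf (a + 2))"
    "(LINT y:{0<..}|lborel. Pf (a + 2) y) = (2 / pi) * (LINT x:{0<..<1}|lborel. H2 a x)"
proof -
  have intm: "set_integrable lborel {-1<..<0} (\<lambda>v. H2 a (- v))"
    using interval_integrable_mirror[of "ereal (-1)" "ereal 0" "H2 a"] int
    by (simp add: interval_lebesgue_integrable_def)
  have eqv: "(2 / pi) * H2 a (- v) = Pf (a + 2) (- ln (- v)) * (- 1 / v)" if "v \<in> {-1<..<0}" for v
  proof -
    have "0 < - v" "- v < 1" using that by auto
    from pt2[OF this, of a] show ?thesis by (simp add: divide_inverse)
  qed
  have int_fg: "set_integrable lborel (einterval (ereal (-1)) (ereal 0)) (\<lambda>v. Pf (a + 2) (- ln (- v)) * (- 1 / v))"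
  proof -
    have "set_integrable lborel {-1<..<0} (\<lambda>v. (2 / pi) * H2 a (- v))" using intm by simp
    thus ?thesis using set_integrable_cong[OF refl refl, of "{-1<..<0}" "\<lambda>v. (2 / pi) * H2 a (- v)"
        "\<lambda>v. Pf (a + 2) (- ln (- v)) * (- 1 / v)" lborel] eqv by simp
  qed
  have nn: "0 \<le> Pf (a + 2) (- ln (- v))" if "-1 < v" "v < 0" for v
  proof -
    have u: "0 < - v" "- v < 1" using that by auto
    have "Pf (a + 2) (- ln (- v)) = (Pf (a + 2) (- ln (- v)) * (1 / (- v))) * (- v)" using u by simp
    also have "\<dots> = (2 / pi) * H2 a (- v) * (- v)" using pt2[OF u] by simp
    moreover have "0 \<le> (2 / pi) * H2 a (- v) * (- v)"
      using H2_nonneg[OF a, of "- v"] u by (intro mult_nonneg_nonneg) auto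
    ultimately show ?thesis by simp
  qed
  have cont: "isCont (Pf (a + 2)) (- ln (- v))" if "-1 < v" "v < 0" for v
  proof -
    have "ln (- v) < 0" using that by simp
    moreover have "0 < ln (2::real)" by simp
    ultimately have "- ln 2 < - ln (- v)" "- ln (- v) \<noteq> 0" by linarith+
    hence "isCont levy_density (- ln (- v))" by (intro isCont_levy_density)
    thus ?thesis unfolding Pf_def by (auto intro!: continuous_intros)
  qed
  have lim1: "((ereal \<circ> (\<lambda>v. - ln (- v)) \<circ> real_of_ereal) \<longlongrightarrow> ereal 0) (at_right (ereal (-1)))"
  proof -
    have "((\<lambda>v. - ln (- v)) \<longlongrightarrow> - ln (- (-1))) (at_right (-1::real))"
      by (intro tendsto_intros) auto
    thus ?thesis by (simp add: ereal_tendsto_simps)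
  qed
  have lim2: "((ereal \<circ> (\<lambda>v. - ln (- v)) \<circ> real_of_ereal) \<longlongrightarrow> \<infinity>) (at_left (ereal 0))"
  proof -
    have "LIM x at_right 0. ln (x::real) :> at_bot" by (rule ln_at_0)
    hence "LIM x at_right 0. - ln (x::real) :> at_top" by (simp add: filterlim_uminus_at_top)
    hence "LIM v at_left 0. - ln (- (v::real)) :> at_top" by (simp add: filterlim_at_left_to_right)
    thus ?thesis by (simp add: ereal_tendsto_simps)
  qed
  note S = interval_integral_substitution_nonneg[of "ereal (-1)" "ereal 0" "\<lambda>v. - ln (- v)" "\<lambda>v. - 1 / v" "Pf (a + 2)"
      "ereal 0" "\<infinity>"]
  have hyps: "ereal (-1) < ereal 0"
    "\<And>x. ereal (-1) < ereal x \<Longrightarrow> ereal x < ereal 0 \<Longrightarrow> DERIV (\<lambda>v. - ln (- v)) x :> - 1 / x"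
    "\<And>x. ereal (-1) < ereal x \<Longrightarrow> ereal x < ereal 0 \<Longrightarrow> isCont (Pf (a + 2)) (- ln (- x))"
    "\<And>x. ereal (-1) < ereal x \<Longrightarrow> ereal x < ereal 0 \<Longrightarrow> isCont (\<lambda>v. - 1 / v) x"
    "\<And>x. ereal (-1) < ereal x \<Longrightarrow> ereal x < ereal 0 \<Longrightarrow> 0 \<le> Pf (a + 2) (- ln (- x))"
    "\<And>x. ereal (-1) \<le> ereal x \<Longrightarrow> ereal x \<le> ereal 0 \<Longrightarrow> 0 \<le> - 1 / x"
    using cont nn by (auto intro!: derivative_eq_intros continuous_intros simp: divide_simps)
  note S' = S[OF hyps lim1 lim2 int_fg]
  show "set_integrable lborel {0<..} (Pf (a + 2))" using S'(1) by simp
  have "(LINT y:{0<..}|lborel. Pf (a + 2) y) = (LBINT x=ereal 0..\<infinity>. Pf (a + 2) x)"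
    by (simp add: interval_integral_to_infinity_eq)
  also have "\<dots> = (LBINT x=ereal (-1)..ereal 0. Pf (a + 2) (- ln (- x)) * (- 1 / x))" by (rule S'(2))
  also have "\<dots> = (LINT x:{-1<..<0}|lborel. Pf (a + 2) (- ln (- x)) * (- 1 / x))"
    by (simp add: interval_lebesgue_integral_le_eq)
  also have "\<dots> = (LINT x:{-1<..<0}|lborel. (2 / pi) * H2 a (- x))"
    by (rule set_lebesgue_integral_cong) (use eqv in auto)
  also have "\<dots> = (LBINT x=ereal (-1)..ereal 0. (2 / pi) * H2 a (- x))"
    by (simp add: interval_lebesgue_integral_le_eq)
  also have "\<dots> = (LBINT x=ereal 0..ereal 1. (2 / pi) * H2 a x)"
    using interval_integral_reflect[of "ereal 0" "ereal 1" "\<lambda>x. (2 / pi) * H2 a x"] by simp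
  also have "\<dots> = (LINT x:{0<..<1}|lborel. (2 / pi) * H2 a x)"
    by (simp add: interval_lebesgue_integral_le_eq)
  also have "\<dots> = (2 / pi) * (LINT x:{0<..<1}|lborel. H2 a x)" by simp
  finally show "(LINT y:{0<..}|lborel. Pf (a + 2) y) = (2 / pi) * (LINT x:{0<..<1}|lborel. H2 a x)" .
qed

lemma sub3:
  fixes a :: real
  assumes a: "\<bar>a\<bar> < 1" and int: "set_integrable lborel {0<..<1/2} (H3 a)"
  shows "set_integrable lborel {- ln 2<..<0} (Rf (a + 2))"
    "(LINT y:{- ln 2<..<0}|lborel. Rf (a + 2) y) = (2 / pi) * (LINT x:{0<..<1/2}|lborel. H3 a x)"
proof -
  have intm: "set_integrable lborel {-1/2<..<0} (\<lambda>v. H3 a (- v))"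
    using interval_integrable_mirror[of "ereal (-1/2)" "ereal 0" "H3 a"] int
    by (simp add: interval_lebesgue_integrable_def)
  have eqv: "(2 / pi) * H3 a (- v) = Rf (a + 2) (ln (1 + v)) * (1 / (1 + v))" if "v \<in> {-1/2<..<0}" for v
  proof -
    have "0 < - v" "- v < 1/2" using that by auto
    from pt3[OF this, of a] show ?thesis by simp
  qed
  have int_fg: "set_integrable lborel (einterval (ereal (-1/2)) (ereal 0)) (\<lambda>v. Rf (a + 2) (ln (1 + v)) * (1 / (1 + v)))"
  proof -
    have "set_integrable lborel {-1/2<..<0} (\<lambda>v. (2 / pi) * H3 a (- v))" using intm by simp
    thus ?thesis using set_integrable_cong[OF refl refl, of "{-1/2<..<0}" "\<lambda>v. (2 / pi) * H3 a (- v)"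
        "\<lambda>v. Rf (a + 2) (ln (1 + v)) * (1 / (1 + v))" lborel] eqv by simp
  qed
  have nn: "0 \<le> Rf (a + 2) y" for y
    unfolding Rf_def using levy_density_nonneg by simp
  have cont: "isCont (Rf (a + 2)) (ln (1 + v))" if "-1/2 < v" "v < 0" for v
  proof -
    have l: "ln (1 + v) < 0" "- ln 2 < ln (1 + v)" using that by (auto intro!: ln_gt_mln2)
    hence "isCont levy_density (ln (1 + v))" by (intro isCont_levy_density) auto
    moreover have "1 - exp (ln (1 + v)) > 0" using l by simp
    ultimately show ?thesis unfolding Rf_def by (auto intro!: continuous_intros)
  qed
  have lim1: "((ereal \<circ> (\<lambda>v. ln (1 + v)) \<circ> real_of_ereal) \<longlongrightarrow> ereal (- ln 2)) (at_right (ereal (-1/2)))"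
  proof -
    have "((\<lambda>v. ln (1 + v)) \<longlongrightarrow> ln (1 + (-1/2))) (at_right (-1/2::real))"
      by (intro tendsto_intros) auto
    hence "((\<lambda>v. ln (1 + v)) \<longlongrightarrow> - ln 2) (at_right (-1/2::real))" by (simp add: ln_div)
    thus ?thesis by (simp add: ereal_tendsto_simps)
  qed
  have lim2: "((ereal \<circ> (\<lambda>v. ln (1 + v)) \<circ> real_of_ereal) \<longlongrightarrow> ereal 0) (at_left (ereal 0))"
  proof -
    have "((\<lambda>v. ln (1 + v)) \<longlongrightarrow> ln (1 + 0)) (at_left (0::real))"
      by (intro tendsto_intros) auto
    thus ?thesis by (simp add: ereal_tendsto_simps)
  qed
  note S = interval_integral_substitution_nonneg[of "ereal (-1/2)" "ereal 0" "\<lambda>v. ln (1 + v)" "\<lambda>v. 1 / (1 + v)" "Rf (a + 2)"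
      "ereal (- ln 2)" "ereal 0"]
  have hyps: "ereal (-1/2) < ereal 0"
    "\<And>x. ereal (-1/2) < ereal x \<Longrightarrow> ereal x < ereal 0 \<Longrightarrow> DERIV (\<lambda>v. ln (1 + v)) x :> 1 / (1 + x)"
    "\<And>x. ereal (-1/2) < ereal x \<Longrightarrow> ereal x < ereal 0 \<Longrightarrow> isCont (Rf (a + 2)) (ln (1 + x))"
    "\<And>x. ereal (-1/2) < ereal x \<Longrightarrow> ereal x < ereal 0 \<Longrightarrow> isCont (\<lambda>v. 1 / (1 + v)) x"
    "\<And>x. ereal (-1/2) < ereal x \<Longrightarrow> ereal x < ereal 0 \<Longrightarrow> 0 \<le> Rf (a + 2) (ln (1 + x))"
    "\<And>x. ereal (-1/2) \<le> ereal x \<Longrightarrow> ereal x \<le> ereal 0 \<Longrightarrow> 0 \<le> 1 / (1 + x)"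
    using cont nn by (auto intro!: derivative_eq_intros continuous_intros)
  note S' = S[OF hyps lim1 lim2 int_fg]
  show "set_integrable lborel {- ln 2<..<0} (Rf (a + 2))" using S'(1) by simp
  have "(LINT y:{- ln 2<..<0}|lborel. Rf (a + 2) y) = (LBINT x=ereal (- ln 2)..ereal 0. Rf (a + 2) x)"
    by (simp add: interval_lebesgue_integral_le_eq)
  also have "\<dots> = (LBINT x=ereal (-1/2)..ereal 0. Rf (a + 2) (ln (1 + x)) * (1 / (1 + x)))" by (rule S'(2))
  also have "\<dots> = (LINT x:{-1/2<..<0}|lborel. Rf (a + 2) (ln (1 + x)) * (1 / (1 + x)))"
    by (simp add: interval_lebesgue_integral_le_eq)
  also have "\<dots> = (LINT x:{-1/2<..<0}|lborel. (2 / pi) * H3 a (- x))"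
    by (rule set_lebesgue_integral_cong) (use eqv in auto)
  also have "\<dots> = (LBINT x=ereal (-1/2)..ereal 0. (2 / pi) * H3 a (- x))"
    by (simp add: interval_lebesgue_integral_le_eq)
  also have "\<dots> = (LBINT x=ereal 0..ereal (1/2). (2 / pi) * H3 a x)"
    using interval_integral_reflect[of "ereal 0" "ereal (1/2)" "\<lambda>x. (2 / pi) * H3 a x"] by simp
  also have "\<dots> = (LINT x:{0<..<1/2}|lborel. (2 / pi) * H3 a x)"
    by (simp add: interval_lebesgue_integral_le_eq)
  also have "\<dots> = (2 / pi) * (LINT x:{0<..<1/2}|lborel. H3 a x)" by simp
  finally show "(LINT y:{- ln 2<..<0}|lborel. Rf (a + 2) y) = (2 / pi) * (LINT x:{0<..<1/2}|lborel. H3 a x)" .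
qed



lemma Pf_zero: "Pf q 0 = 0" by (simp add: Pf_def)

lemma kappa_main:
  fixes q :: real
  assumes q: "1 < q" "q < 3"
  shows "kappa q = (2 / pi) * ((\<Sum>n. 2 * (q - 2)^2 / ((real n + 1)^2 - (q - 2)^2)) - 1)"
proof -
  define a where "a = q - 2"
  have a: "\<bar>a\<bar> < 1" using q by (auto simp: a_def)
  have qa: "q = a + 2" by (simp add: a_def)
  define S where "S = (\<Sum>n. 2 * a^2 / ((real n + 1)^2 - a^2))"
  obtain I1 I2 I3 where L:
    "set_integrable lborel {1/2<..<1} (H1 a)" "(LINT x:{1/2<..<1}|lborel. H1 a x) = I1"
    "set_integrable lborel {0<..<1} (H2 a)" "(LINT x:{0<..<1}|lborel. H2 a x) = I2"
    "set_integrable lborel {0<..<1/2} (H3 a)" "(LINT x:{0<..<1/2}|lborel. H3 a x) = I3"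
    "I1 + I2 + I3 = S + 2 * a + 3"
    using H_leb[OF a] unfolding S_def by blast
  note s1 = sub1[OF a L(1)] and s2 = sub2[OF a L(3)] and s3 = sub3[OF a L(5)]
  have psi: "Psi q = - (4 / pi) * q + (LINT y:{- ln 2<..}|lborel. Pf q y)"
    by (simp add: Psi_def Pf_def)
  have split: "(LINT y:{- ln 2<..}|lborel. Pf q y) = (LINT y:{- ln 2<..<0}|lborel. Pf q y) + (LINT y:{0<..}|lborel. Pf q y)"
  proof -
    have i1: "integrable lborel (\<lambda>y. indicator {- ln 2<..<0} y *\<^sub>R Pf q y)"
      using s1(1) unfolding qa set_integrable_def .
    have i2: "integrable lborel (\<lambda>y. indicator {0<..} y *\<^sub>R Pf q y)"
      using s2(1) unfolding qa set_integrable_def .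
    have "(\<lambda>y. indicator {- ln 2<..} y *\<^sub>R Pf q y) = (\<lambda>y. indicator {- ln 2<..<0} y *\<^sub>R Pf q y + indicator {0<..} y *\<^sub>R Pf q y)"
    proof
      fix y :: real
      have l2: "- ln 2 < (0::real)" by simp
      show "indicator {- ln 2<..} y *\<^sub>R Pf q y = indicator {- ln 2<..<0} y *\<^sub>R Pf q y + indicator {0<..} y *\<^sub>R Pf q y"
      proof (cases "y > 0")
        case True
        hence "- ln 2 < y" using l2 by linarith
        thus ?thesis using True by (simp split: split_indicator)
      next
        case False
        thus ?thesis by (cases "y = 0") (auto simp: Pf_zero split: split_indicator)
      qed
    qed
    thus ?thesis unfolding set_lebesgue_integral_def using Bochner_Integration.integral_add[OF i1 i2] by simp
  qed
  have rpart: "(LINT y:{..<0}|lborel. (1 - exp y) powr q * levy_density y) = (LINT y:{- ln 2<..<0}|lborel. Rf q y)"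
  proof -
    have "(\<lambda>y. indicator {..<0} y *\<^sub>R ((1 - exp y) powr q * levy_density y)) = (\<lambda>y. indicator {- ln 2<..<0} y *\<^sub>R Rf q y)"
    proof
      fix y :: real
      show "indicator {..<0} y *\<^sub>R ((1 - exp y) powr q * levy_density y) = indicator {- ln 2<..<0} y *\<^sub>R Rf q y"
        by (cases "y > - ln 2") (auto simp: Rf_def levy_density_def split: split_indicator)
    qed
    thus ?thesis unfolding set_lebesgue_integral_def by simp
  qed
  have "kappa q = - (4 / pi) * q + (LINT y:{- ln 2<..<0}|lborel. Pf q y) + (LINT y:{0<..}|lborel. Pf q y)
      + (LINT y:{- ln 2<..<0}|lborel. Rf q y)"
    unfolding kappa_def psi split rpart by simp
  also have "\<dots> = - (4 / pi) * (a + 2) + (2 / pi) * (I1 + I2 + I3)"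
    unfolding qa s1(2) s2(2) s3(2) L(2) L(4) L(6) by (simp add: algebra_simps add_divide_distrib)
  also have "\<dots> = (2 / pi) * (S - 1)" unfolding L(7) by (simp add: field_simps)
  finally show ?thesis by (simp add: S_def a_def)
qed

lemma kappa_formula:
  fixes q :: real
  assumes q: "1 < q" "q < 3"
  shows "kappa q = - 2 * (cos (pi * q) / pi) * Gamma (q - 1) * Gamma (3 - q)"
proof -
  define a where "a = q - 2"
  have a: "\<bar>a\<bar> < 1" using q by (auto simp: a_def)
  have c: "cos (pi * q) = cos (pi * a)"
  proof -
    have "pi * q = pi * a + 2 * pi" by (simp add: a_def algebra_simps)
    thus ?thesis by (simp add: cos_periodic)
  qed
  have g: "Gamma (q - 1) = Gamma (1 + a)" "Gamma (3 - q) = Gamma (1 - a)" by (simp_all add: a_def)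
  have "- 2 * (cos (pi * q) / pi) * Gamma (q - 1) * Gamma (3 - q) = - (2 / pi) * (cos (pi * a) * Gamma (1 + a) * Gamma (1 - a))"
    unfolding c g by simp
  also have "\<dots> = (2 / pi) * ((\<Sum>n. 2 * a^2 / ((real n + 1)^2 - a^2)) - 1)"
    unfolding cot_series[OF a] by (simp add: algebra_simps)
  also have "\<dots> = kappa q" using kappa_main[OF q] by (simp add: a_def)
  finally show ?thesis by simp
qed

theorem proposition4p2:
  shows "(\<forall>q::real. - 3/2 < q \<and> q < 1/2 \<longrightarrow>
            Phi_plus q = - 2 * (Gamma (1/2 - q) * Gamma (3/2 + q)) / (Gamma (- q) * Gamma (1 + q)))
       \<and> Psi 0 = 0
       \<and> (\<forall>q::real. 1 < q \<and> q < 3 \<longrightarrow>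
            kappa q = - 2 * (cos (pi * q) / pi) * Gamma (q - 1) * Gamma (3 - q))"
proof (intro conjI allI impI)
  show "Psi 0 = 0" by (simp add: Psi_def)
next
  fix q :: real assume "1 < q \<and> q < 3"
  thus "kappa q = - 2 * (cos (pi * q) / pi) * Gamma (q - 1) * Gamma (3 - q)"
    using kappa_formula by auto
next
  fix p :: real assume p: "- 3/2 < p \<and> p < 1/2"
  define q where "q = p + 5/2"
  have q: "1 < q" "q < 3" using p by (auto simp: q_def)
  have "Phi_plus p = kappa q" by (simp add: Phi_plus_def omega_plus_def q_def)
  also have "\<dots> = - 2 * (cos (pi * q) / pi) * Gamma (q - 1) * Gamma (3 - q)" by (rule kappa_formula[OF q])
  also have "\<dots> = - 2 * (Gamma (1/2 - p) * Gamma (3/2 + p)) / (Gamma (- p) * Gamma (1 + p))"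
  proof -
    have g: "Gamma (q - 1) = Gamma (3/2 + p)" "Gamma (3 - q) = Gamma (1/2 - p)"
      by (simp_all add: q_def algebra_simps)
    have r: "Gamma (- p) * Gamma (1 + p) = pi / cos (pi * q)"
    proof -
      have e1: "Gamma (- p) * Gamma (1 - (- p)) = pi / sin (pi * (- p))" by (rule Gamma_reflection_real)
      have e0: "1 - (- p) = 1 + p" by simp
      have "sin (pi * (- p)) = cos (pi * q)"
      proof -
        have "pi * q = (pi * p + pi / 2) + 2 * pi" by (simp add: q_def algebra_simps)
        hence "cos (pi * q) = cos ((pi * p + pi / 2) + 2 * pi)" by (simp only:)
        also have "\<dots> = cos (pi * p + pi / 2)" by (rule cos_periodic)
        finally have "cos (pi * q) = cos (pi * p + pi / 2)" .
        also have "\<dots> = - sin (pi * p)" by (simp add: cos_add)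
        finally show ?thesis by simp
      qed
      from e1 show ?thesis unfolding e0 \<open>sin (pi * (- p)) = cos (pi * q)\<close> .
    qed
    show ?thesis unfolding r g by (simp add: field_simps)
  qed
  finally show "Phi_plus p = - 2 * (Gamma (1/2 - p) * Gamma (3/2 + p)) / (Gamma (- p) * Gamma (1 + p))" .
qed

end
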